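(* Let $\alpha\in(0,\infty)^T$ and $u_t(x)=\frac{1}{\alpha_t}[1-\exp(-\alpha_t x)]$, $t\in\mathbb{T}$. For $x\in\mathbb{R}$ and $Z\in L^\infty$, let $(X_t)\in\mathcal{A}(x-Z)$ be the optimal intertemporal allocation of $x-Z$, i.e. $\sum_{t\in\mathbb{T}}E[u_t(\tilde X_t)]=U(x-Z)$. Then $X_1=\frac{B_1}{\alpha_1}[\beta_1x-\log L_1(\alpha,-Z)]$ and, for $t=2,\dots,T$, $X_t=\frac{B_t}{\alpha_t}\Big[\beta_1x-\log L_t(\alpha,-Z)+\sum_{k=1}^{t-1}\frac{\beta_{k+1}}{\alpha_k}\log L_k(\alpha,-Z)\Big]$.
   Context: Let $T\ge 1$ be an integer and $\mathbb{T}=\{1,\dots,T\}$. Let $(\Omega,\mathcal{F},(\mathcal{F}_t)_{t\in\{0,1,\dots,T\}},P)$ be a filtered probability space and $L^{\infty}=L^{\infty}(\Omega,\mathcal{F}_T,P)$; write $E_t[Y]=E[Y\mid\mathcal{F}_t]$. Let $(r_t)_{t\in\mathbb{T}}$ be a bounded, nonnegative, predictable process, $B_0=1$, $B_t=\prod_{k=1}^t(1+r_k)$, and $\tilde X_t=X_t/B_t$. For $W\in L^\infty$, $\mathcal{A}(W)$ is the set of $(\mathcal{F}_t)$-adapted processes $(Y_t)_{t\in\mathbb{T}}$ with $Y_t\in L^\infty$ and $\sum_{t\in\mathbb{T}}\tilde Y_t=W$ a.s., and $U(W)=\sup\{\sum_{t\in\mathbb{T}}E[u_t(\tilde Y_t)]:(Y_t)\in\mathcal{A}(W)\}$.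 For $\alpha\in(0,\infty)^T$ define $\beta_t$ by $1/\beta_t=\sum_{k=t}^T 1/\alpha_k$. For $W\in L^\infty$ define $L_T(\alpha,W)=\exp(-\alpha_T W)$ and $L_{t-1}(\alpha,W)=E_{t-1}[L_t(\alpha,W)]^{\beta_{t-1}/\beta_t}$ for $t=2,\dots,T$. *)

theory Defs
  imports "HOL-Probability.Probability"
begin

definition filtration_upto :: "'a measure \<Rightarrow> (nat \<Rightarrow> 'a measure) \<Rightarrow> nat \<Rightarrow> bool" where
  "filtration_upto M F T \<longleftrightarrow>
     (\<forall>t\<le>T. subalgebra M (F t)) \<and> (\<forall>s t. s \<le> t \<and> t \<le> T \<longrightarrow> sets (F s) \<subseteq> sets (F t))"

definition Linf :: "'a measure \<Rightarrow> 'a measure \<Rightarrow> ('a \<Rightarrow> real) \<Rightarrow> bool" where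
  "Linf M G Y \<longleftrightarrow> Y \<in> borel_measurable G \<and> (\<exists>C. AE \<omega> in M. \<bar>Y \<omega>\<bar> \<le> C)"

definition bank :: "(nat \<Rightarrow> 'a \<Rightarrow> real) \<Rightarrow> nat \<Rightarrow> 'a \<Rightarrow> real" where
  "bank r t \<omega> = (\<Prod>k\<in>{1..t}. 1 + r k \<omega>)"

definition disc :: "(nat \<Rightarrow> 'a \<Rightarrow> real) \<Rightarrow> (nat \<Rightarrow> 'a \<Rightarrow> real) \<Rightarrow> nat \<Rightarrow> 'a \<Rightarrow> real" where
  "disc r X t \<omega> = X t \<omega> / bank r t \<omega>"

definition adm :: "'a measure \<Rightarrow> (nat \<Rightarrow> 'a measure) \<Rightarrow> nat \<Rightarrow> (nat \<Rightarrow> 'a \<Rightarrow> real)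
    \<Rightarrow> ('a \<Rightarrow> real) \<Rightarrow> (nat \<Rightarrow> 'a \<Rightarrow> real) set" where
  "adm M F T r W = {Y. (\<forall>t\<in>{1..T}. Y t \<in> borel_measurable (F t) \<and> Linf M (F T) (Y t))
      \<and> (AE \<omega> in M. (\<Sum>t\<in>{1..T}. disc r Y t \<omega>) = W \<omega>)}"

definition Uval :: "'a measure \<Rightarrow> (nat \<Rightarrow> 'a measure) \<Rightarrow> nat \<Rightarrow> (nat \<Rightarrow> 'a \<Rightarrow> real)
    \<Rightarrow> (nat \<Rightarrow> real \<Rightarrow> real) \<Rightarrow> ('a \<Rightarrow> real) \<Rightarrow> real" where
  "Uval M F T r u W = Sup {(\<Sum>t\<in>{1..T}. integral\<^sup>L M (\<lambda>\<omega>. u t (disc r Y t \<omega>))) | Y. Y \<in> adm M F T r W}"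

definition exp_util :: "(nat \<Rightarrow> real) \<Rightarrow> nat \<Rightarrow> real \<Rightarrow> real" where
  "exp_util \<alpha> t x = (1 - exp (- \<alpha> t * x)) / \<alpha> t"

definition beta :: "(nat \<Rightarrow> real) \<Rightarrow> nat \<Rightarrow> nat \<Rightarrow> real" where
  "beta \<alpha> T t = 1 / (\<Sum>k\<in>{t..T}. 1 / \<alpha> k)"

text \<open>Auxiliary: Lrec n = L_{T-n}(alpha, W).\<close>
fun Lrec :: "'a measure \<Rightarrow> (nat \<Rightarrow> 'a measure) \<Rightarrow> nat \<Rightarrow> (nat \<Rightarrow> real) \<Rightarrow> ('a \<Rightarrow> real)
    \<Rightarrow> nat \<Rightarrow> 'a \<Rightarrow> real" where
  "Lrec M F T \<alpha> W 0 = (\<lambda>\<omega>. exp (- \<alpha> T * W \<omega>))"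
| "Lrec M F T \<alpha> W (Suc n) = (\<lambda>\<omega>.
     (real_cond_exp M (F (T - Suc n)) (Lrec M F T \<alpha> W n) \<omega>)
       powr (beta \<alpha> T (T - Suc n) / beta \<alpha> T (T - n)))"

definition Lfun :: "'a measure \<Rightarrow> (nat \<Rightarrow> 'a measure) \<Rightarrow> nat \<Rightarrow> (nat \<Rightarrow> real) \<Rightarrow> ('a \<Rightarrow> real)
    \<Rightarrow> nat \<Rightarrow> 'a \<Rightarrow> real" where
  "Lfun M F T \<alpha> W t = Lrec M F T \<alpha> W (T - t)"

end

theory Submission
  imports Defs
begin

definition bnd :: "'a measure \<Rightarrow> ('a \<Rightarrow> real) \<Rightarrow> bool" where
  "bnd M f \<longleftrightarrow> (\<exists>C. AE \<omega> in M. \<bar>f \<omega>\<bar> \<le> C)"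

lemma bnd_const[simp]: "bnd M (\<lambda>_. c)"
  unfolding bnd_def by (rule exI[of _ "\<bar>c\<bar>"]) simp

lemma bnd_add: "bnd M f \<Longrightarrow> bnd M g \<Longrightarrow> bnd M (\<lambda>\<omega>. f \<omega> + g \<omega>)"
  unfolding bnd_def
proof (elim exE)
  fix C D assume "AE \<omega> in M. \<bar>f \<omega>\<bar> \<le> C" "AE \<omega> in M. \<bar>g \<omega>\<bar> \<le> D"
  then have "AE \<omega> in M. \<bar>f \<omega> + g \<omega>\<bar> \<le> C + D" by eventually_elim auto
  then show "\<exists>C. AE \<omega> in M. \<bar>f \<omega> + g \<omega>\<bar> \<le> C" by blast
qed

lemma bnd_mult: "bnd M f \<Longrightarrow> bnd M g \<Longrightarrow> bnd M (\<lambda>\<omega>. f \<omega> * g \<omega>)"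
  unfolding bnd_def
proof (elim exE)
  fix C D assume "AE \<omega> in M. \<bar>f \<omega>\<bar> \<le> C" "AE \<omega> in M. \<bar>g \<omega>\<bar> \<le> D"
  then have "AE \<omega> in M. \<bar>f \<omega> * g \<omega>\<bar> \<le> C * D" 
  proof eventually_elim
    case (elim \<omega>) then show ?case by (simp add: abs_mult mult_mono')
  qed
  then show "\<exists>C. AE \<omega> in M. \<bar>f \<omega> * g \<omega>\<bar> \<le> C" by blast
qed

lemma bnd_minus: "bnd M f \<Longrightarrow> bnd M (\<lambda>\<omega>. - f \<omega>)"
  unfolding bnd_def by simp

lemma bnd_diff: "bnd M f \<Longrightarrow> bnd M g \<Longrightarrow> bnd M (\<lambda>\<omega>. f \<omega> - g \<omega>)"
  using bnd_add[OF _ bnd_minus, of M f g] by simp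

lemma bnd_cmult: "bnd M f \<Longrightarrow> bnd M (\<lambda>\<omega>. c * f \<omega>)"
  using bnd_mult[of M "\<lambda>_. c" f] by simp

lemma bnd_sum: "finite S \<Longrightarrow> (\<And>i. i \<in> S \<Longrightarrow> bnd M (f i)) \<Longrightarrow> bnd M (\<lambda>\<omega>. \<Sum>i\<in>S. f i \<omega>)"
  by (induction S rule: finite_induct) (auto intro!: bnd_add)

lemma bnd_exp: "bnd M f \<Longrightarrow> bnd M (\<lambda>\<omega>. exp (f \<omega>))"
  unfolding bnd_def
proof (elim exE)
  fix C assume "AE \<omega> in M. \<bar>f \<omega>\<bar> \<le> C"
  then have "AE \<omega> in M. \<bar>exp (f \<omega>)\<bar> \<le> exp C" by eventually_elim auto
  then show "\<exists>C. AE \<omega> in M. \<bar>exp (f \<omega>)\<bar> \<le> C" by blast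
qed

lemma bnd_ln:
  assumes "0 < a" "AE \<omega> in M. a \<le> f \<omega> \<and> f \<omega> \<le> b"
  shows "bnd M (\<lambda>\<omega>. ln (f \<omega>))"
  unfolding bnd_def
proof -
  from assms(2) have "AE \<omega> in M. \<bar>ln (f \<omega>)\<bar> \<le> \<bar>ln a\<bar> + \<bar>ln b\<bar>"
  proof eventually_elim
    case (elim \<omega>)
    then have "ln a \<le> ln (f \<omega>)" "ln (f \<omega>) \<le> ln b" using assms(1) by auto
    then show ?case by linarith
  qed
  then show "\<exists>C. AE \<omega> in M. \<bar>ln (f \<omega>)\<bar> \<le> C" by blast
qed

lemma bnd_AE_cong: "bnd M f \<Longrightarrow> AE \<omega> in M. f \<omega> = g \<omega> \<Longrightarrow> bnd M g"
  unfolding bnd_def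
proof (elim exE)
  fix C assume "AE \<omega> in M. \<bar>f \<omega>\<bar> \<le> C" "AE \<omega> in M. f \<omega> = g \<omega>"
  then have "AE \<omega> in M. \<bar>g \<omega>\<bar> \<le> C" by eventually_elim auto
  then show "\<exists>C. AE \<omega> in M. \<bar>g \<omega>\<bar> \<le> C" by blast
qed

lemma exp_strict: "x \<noteq> 0 \<Longrightarrow> 1 + x < exp (x::real)"
proof (cases "1 + x/2 < 0")
  case True then show ?thesis using exp_gt_zero[of x] by linarith
next
  case False
  assume "x \<noteq> 0"
  have "(1 + x/2)^2 \<le> exp (x/2) ^ 2"
    using False exp_ge_add_one_self[of "x/2"] by (intro power_mono) auto
  also have "\<dots> = exp x" by (simp add: power2_eq_square flip: exp_add)
  finally have "(1 + x/2)^2 \<le> exp x" .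
  moreover have "1 + x < (1 + x/2)^2"
  proof -
    have "0 < x^2" using \<open>x \<noteq> 0\<close> by simp
    then show ?thesis by (simp add: power2_eq_square algebra_simps)
  qed
  ultimately show ?thesis by linarith
qed

lemma util_concave:
  fixes a y z :: real
  assumes "0 < a"
  shows "(1 - exp (- a * y)) / a \<le> (1 - exp (- a * z)) / a + exp (- a * z) * (y - z)"
    and "(1 - exp (- a * y)) / a = (1 - exp (- a * z)) / a + exp (- a * z) * (y - z) \<Longrightarrow> y = z"
proof -
  define s where "s = a * (y - z)"
  have ey: "exp (- a * y) = exp (- a * z) * exp (- s)"
    unfolding s_def by (simp add: algebra_simps flip: exp_add)
  have key: "(1 - exp (- a * z)) / a + exp (- a * z) * (y - z) - (1 - exp (- a * y)) / a
      = exp (- a * z) / a * (exp (- s) - 1 + s)"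
    unfolding ey s_def using assms by (simp add: field_simps)
  have "0 \<le> exp (- s) - 1 + s" using exp_ge_add_one_self[of "-s"] by linarith
  then have "0 \<le> exp (- a * z) / a * (exp (- s) - 1 + s)" using assms by simp
  then show "(1 - exp (- a * y)) / a \<le> (1 - exp (- a * z)) / a + exp (- a * z) * (y - z)"
    using key by linarith
  assume eq: "(1 - exp (- a * y)) / a = (1 - exp (- a * z)) / a + exp (- a * z) * (y - z)"
  show "y = z"
  proof (rule ccontr)
    assume "y \<noteq> z"
    then have "s \<noteq> 0" using assms unfolding s_def by simp
    then have "0 < exp (- s) - 1 + s" using exp_strict[of "-s"] by linarith
    then have "0 < exp (- a * z) / a * (exp (- s) - 1 + s)" using assms by simp
    then show False using key eq by linarith
  qed
qed


locale S = prob_space M for M :: "'a measure" +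
  fixes F :: "nat \<Rightarrow> 'a measure" and T :: nat and \<alpha> :: "nat \<Rightarrow> real"
    and Z :: "'a \<Rightarrow> real" and x :: real
  assumes T1: "1 \<le> T" and filt: "filtration_upto M F T"
    and apos: "\<And>t. t \<in> {1..T} \<Longrightarrow> 0 < \<alpha> t" and Zl: "Linf M (F T) Z"
begin

lemma sub: "t \<le> T \<Longrightarrow> subalgebra M (F t)"
  using filt unfolding filtration_upto_def by auto

lemma meas_mono:
  assumes "s \<le> t" "t \<le> T" "f \<in> borel_measurable (F s)"
  shows "f \<in> borel_measurable (F t)"
proof -
  have "subalgebra (F t) (F s)"
    using sub[of s] sub[of t] assms filt unfolding filtration_upto_def subalgebra_def by auto
  then show ?thesis using measurable_from_subalg assms(3) by blast
qed

lemma meas_M: "t \<le> T \<Longrightarrow> f \<in> borel_measurable (F t) \<Longrightarrow> f \<in> borel_measurable M"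
  using sub measurable_from_subalg by blast

lemma sfs: "t \<le> T \<Longrightarrow> sigma_finite_subalgebra M (F t)"
  apply (rule finite_measure_subalgebra_is_sigma_finite)
  unfolding finite_measure_subalgebra_def finite_measure_subalgebra_axioms_def
  using sub finite_measure_axioms by auto

lemma integrable_bnd: "f \<in> borel_measurable M \<Longrightarrow> bnd M f \<Longrightarrow> integrable M f"
  unfolding bnd_def
proof (elim exE)
  fix C assume "f \<in> borel_measurable M" "AE \<omega> in M. \<bar>f \<omega>\<bar> \<le> C"
  then show "integrable M f" by (intro integrable_const_bound[where B=C]) auto
qed

lemma beta_pos: "t \<in> {1..T} \<Longrightarrow> 0 < beta \<alpha> T t"
  unfolding beta_def using apos by (auto intro!: sum_pos)

lemma beta_rec:
  assumes "1 \<le> t" "t < T"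
  shows "1 / beta \<alpha> T t = 1 / \<alpha> t + 1 / beta \<alpha> T (Suc t)"
  unfolding beta_def using assms by (simp add: sum.atLeast_Suc_atMost)

lemma beta_id:
  assumes "1 \<le> t" "t < T"
  shows "beta \<alpha> T (Suc t) / \<alpha> t * (beta \<alpha> T t / beta \<alpha> T (Suc t)) + beta \<alpha> T t / beta \<alpha> T (Suc t) = 1"
proof -
  have b1: "0 < beta \<alpha> T t" "0 < beta \<alpha> T (Suc t)" using beta_pos assms by auto
  have a: "0 < \<alpha> t" using apos assms by auto
  have "beta \<alpha> T (Suc t) / \<alpha> t * (beta \<alpha> T t / beta \<alpha> T (Suc t)) + beta \<alpha> T t / beta \<alpha> T (Suc t)
     = beta \<alpha> T t * (1 / \<alpha> t + 1 / beta \<alpha> T (Suc t))" using b1 by (simp add: field_simps)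
  also have "\<dots> = beta \<alpha> T t * (1 / beta \<alpha> T t)" using beta_rec[OF assms] by simp
  also have "\<dots> = 1" using b1 by simp
  finally show ?thesis .
qed

abbreviation "W \<equiv> (\<lambda>\<omega>. - Z \<omega>)"

lemma Lrec_props:
  "n < T \<Longrightarrow> Lrec M F T \<alpha> W n \<in> borel_measurable (F (T - n)) \<and>
    (\<exists>a b. 0 < a \<and> (AE \<omega> in M. a \<le> Lrec M F T \<alpha> W n \<omega> \<and> Lrec M F T \<alpha> W n \<omega> \<le> b))"
proof (induction n)
  case 0
  obtain C where C: "AE \<omega> in M. \<bar>Z \<omega>\<bar> \<le> C" using Zl unfolding Linf_def by auto
  have m: "Z \<in> borel_measurable (F T)" using Zl Linf_def by auto
  have aT: "0 < \<alpha> T" using apos T1 by auto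
  have "(\<lambda>\<omega>. exp (- \<alpha> T * - Z \<omega>)) \<in> borel_measurable (F T)" using m by measurable
  moreover have "AE \<omega> in M. exp (- (\<alpha> T * C)) \<le> exp (- \<alpha> T * - Z \<omega>) \<and> exp (- \<alpha> T * - Z \<omega>) \<le> exp (\<alpha> T * C)"
    using C
  proof eventually_elim
    case (elim \<omega>)
    then have "- C \<le> Z \<omega>" "Z \<omega> \<le> C" by auto
    then have "\<alpha> T * (- C) \<le> \<alpha> T * Z \<omega>" "\<alpha> T * Z \<omega> \<le> \<alpha> T * C"
      using aT mult_left_mono[of "-C" "Z \<omega>" "\<alpha> T"] mult_left_mono[of "Z \<omega>" C "\<alpha> T"] by auto
    then show ?case by simp
  qed
  ultimately show ?case
    by (intro conjI exI[of _ "exp (- (\<alpha> T * C))"] exI[of _ "exp (\<alpha> T * C)"]) auto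
next
  case (Suc n)
  then have IH: "Lrec M F T \<alpha> W n \<in> borel_measurable (F (T - n))"
    "\<exists>a b. 0 < a \<and> (AE \<omega> in M. a \<le> Lrec M F T \<alpha> W n \<omega> \<and> Lrec M F T \<alpha> W n \<omega> \<le> b)" by auto
  then obtain a b where ab: "0 < a" "AE \<omega> in M. a \<le> Lrec M F T \<alpha> W n \<omega> \<and> Lrec M F T \<alpha> W n \<omega> \<le> b" by auto
  have LM: "Lrec M F T \<alpha> W n \<in> borel_measurable M" using meas_M[OF _ IH(1)] by simp
  have "AE \<omega> in M. \<bar>Lrec M F T \<alpha> W n \<omega>\<bar> \<le> b" using ab(2) by eventually_elim (use ab(1) in auto)
  then have Lb: "bnd M (Lrec M F T \<alpha> W n)" unfolding bnd_def by blast
  have int: "integrable M (Lrec M F T \<alpha> W n)" using integrable_bnd[OF LM Lb] .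
  interpret G: sigma_finite_subalgebra M "F (T - Suc n)" using sfs by auto
  define E where "E = real_cond_exp M (F (T - Suc n)) (Lrec M F T \<alpha> W n)"
  have Ea: "AE \<omega> in M. a \<le> E \<omega>" unfolding E_def
    by (rule G.real_cond_exp_ge_c[OF int]) (use ab(2) in auto)
  have Eb: "AE \<omega> in M. E \<omega> \<le> b" unfolding E_def
    by (rule G.real_cond_exp_le_c[OF int]) (use ab(2) in auto)
  define p where "p = beta \<alpha> T (T - Suc n) / beta \<alpha> T (T - n)"
  have p: "0 < p" unfolding p_def using beta_pos Suc.prems by auto
  have eq: "Lrec M F T \<alpha> W (Suc n) = (\<lambda>\<omega>. E \<omega> powr p)" unfolding E_def p_def by simp
  have "(\<lambda>\<omega>. E \<omega> powr p) \<in> borel_measurable (F (T - Suc n))" unfolding E_def by measurable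
  moreover have "AE \<omega> in M. a powr p \<le> E \<omega> powr p \<and> E \<omega> powr p \<le> b powr p"
    using Ea Eb
  proof eventually_elim
    case (elim \<omega>)
    then show ?case using ab(1) p by (auto intro!: powr_mono2)
  qed
  moreover have "0 < a powr p" using ab(1) by simp
  ultimately show ?case unfolding eq
    by (intro conjI exI[of _ "a powr p"] exI[of _ "b powr p"]) auto
qed

definition "L t = Lfun M F T \<alpha> W t"

lemma L_props:
  assumes "t \<in> {1..T}"
  shows "L t \<in> borel_measurable (F t)" "\<exists>a b. 0 < a \<and> (AE \<omega> in M. a \<le> L t \<omega> \<and> L t \<omega> \<le> b)"
proof -
  have "T - t < T" "T - (T - t) = t" using assms by auto
  then show "L t \<in> borel_measurable (F t)" "\<exists>a b. 0 < a \<and> (AE \<omega> in M. a \<le> L t \<omega> \<and> L t \<omega> \<le> b)"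
    using Lrec_props[of "T - t"] unfolding L_def Lfun_def by auto
qed

lemma L_rec:
  assumes "1 \<le> t" "t < T"
  shows "L t = (\<lambda>\<omega>. real_cond_exp M (F t) (L (Suc t)) \<omega> powr (beta \<alpha> T t / beta \<alpha> T (Suc t)))"
proof -
  have e: "T - t = Suc (T - Suc t)" "T - Suc (T - Suc t) = t" "T - (T - Suc t) = Suc t" using assms by auto
  show ?thesis unfolding L_def Lfun_def e(1) Lrec.simps e(2) e(3) ..
qed

lemma L_T: "L T = (\<lambda>\<omega>. exp (\<alpha> T * Z \<omega>))"
  unfolding L_def Lfun_def by simp

definition "ell t \<omega> = ln (L t \<omega>)"
definition "cc t \<omega> = beta \<alpha> T 1 * x + (\<Sum>k\<in>{1..t-1}. beta \<alpha> T (k+1) / \<alpha> k * ell k \<omega>)"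
definition "ys t \<omega> = (cc t \<omega> - ell t \<omega>) / \<alpha> t"
definition "D t \<omega> = exp (- \<alpha> t * ys t \<omega>)"

lemma ell_T: "ell T \<omega> = \<alpha> T * Z \<omega>"
  unfolding ell_def L_T by simp

lemma ell_meas: "t \<in> {1..T} \<Longrightarrow> ell t \<in> borel_measurable (F t)"
  unfolding ell_def using L_props(1) by measurable

lemma ell_bnd: "t \<in> {1..T} \<Longrightarrow> bnd M (ell t)"
  unfolding ell_def using L_props(2) bnd_ln by blast

lemma cc_meas:
  assumes "t \<le> Suc s" "s \<le> T"
  shows "cc t \<in> borel_measurable (F s)"
proof -
  have "(\<lambda>\<omega>. beta \<alpha> T (k+1) / \<alpha> k * ell k \<omega>) \<in> borel_measurable (F s)" if "k \<in> {1..t-1}" for k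
  proof -
    have "ell k \<in> borel_measurable (F k)" using ell_meas that assms by auto
    moreover have "k \<le> s" using that assms by auto
    ultimately have "ell k \<in> borel_measurable (F s)" using meas_mono[of k s] assms by auto
    then show ?thesis by measurable
  qed
  then show ?thesis unfolding cc_def by (intro borel_measurable_add borel_measurable_const borel_measurable_sum) auto
qed

lemma cc_bnd: "t \<le> Suc T \<Longrightarrow> bnd M (cc t)"
  unfolding cc_def by (intro bnd_add bnd_const bnd_sum bnd_cmult ell_bnd) auto

lemma ys_meas: "t \<in> {1..T} \<Longrightarrow> ys t \<in> borel_measurable (F t)"
proof -
  assume t: "t \<in> {1..T}"
  have [measurable]: "cc t \<in> borel_measurable (F t)" "ell t \<in> borel_measurable (F t)"
    using cc_meas[of t t] ell_meas[of t] t by auto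
  show ?thesis unfolding ys_def by measurable
qed

lemma ys_bnd: "t \<in> {1..T} \<Longrightarrow> bnd M (ys t)"
  unfolding ys_def divide_inverse using cc_bnd[of t] ell_bnd[of t]
  by (auto intro!: bnd_mult bnd_diff)

lemma D_meas: "t \<in> {1..T} \<Longrightarrow> D t \<in> borel_measurable (F t)"
  unfolding D_def using ys_meas[of t] by measurable

lemma D_bnd: "t \<in> {1..T} \<Longrightarrow> bnd M (D t)"
  unfolding D_def using ys_bnd[of t] by (auto intro!: bnd_exp bnd_cmult bnd_minus)

lemma D_eq: "t \<in> {1..T} \<Longrightarrow> D t \<omega> = exp (ell t \<omega> - cc t \<omega>)"
  unfolding D_def ys_def using apos[of t] by (simp add: field_simps)

lemma cc_Suc: "1 \<le> t \<Longrightarrow> cc (Suc t) \<omega> = cc t \<omega> + beta \<alpha> T (Suc t) / \<alpha> t * ell t \<omega>"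
proof -
  assume "1 \<le> t"
  then have "{1..Suc t - 1} = insert t {1..t-1}" "t \<notin> {1..t-1}" by auto
  then show ?thesis unfolding cc_def by (simp add: algebra_simps)
qed


lemma swap_tri:
  fixes g :: "nat \<Rightarrow> nat \<Rightarrow> real"
  shows "(\<Sum>t\<in>{1..T}. \<Sum>k\<in>{1..t-1}. g k t) = (\<Sum>k\<in>{1..T}. \<Sum>t\<in>{Suc k..T}. g k t)"
proof -
  have e1: "{1..t-1} = {k. k \<in> {1..T} \<and> k < t}" if "t \<in> {1..T}" for t using that by auto
  have e2: "{t. t \<in> {1..T} \<and> k < t} = {Suc k..T}" for k by auto
  have "(\<Sum>t\<in>{1..T}. \<Sum>k\<in>{1..t-1}. g k t) = (\<Sum>t\<in>{1..T}. \<Sum>k\<in>{k. k \<in> {1..T} \<and> k < t}. g k t)"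
  proof (rule sum.cong[OF refl])
    fix t assume "t \<in> {1..T}"
    show "(\<Sum>k\<in>{1..t-1}. g k t) = (\<Sum>k\<in>{k. k \<in> {1..T} \<and> k < t}. g k t)"
      by (rule sum.cong[OF e1[OF \<open>t \<in> {1..T}\<close>] refl])
  qed
  also have "\<dots> = (\<Sum>k\<in>{1..T}. \<Sum>t\<in>{t. t \<in> {1..T} \<and> k < t}. g k t)"
    by (rule sum.swap_restrict) auto
  also have "\<dots> = (\<Sum>k\<in>{1..T}. \<Sum>t\<in>{Suc k..T}. g k t)" by (simp only: e2)
  finally show ?thesis .
qed

lemma ys_sum: "(\<Sum>t\<in>{1..T}. ys t \<omega>) = x - Z \<omega>"
proof -
  let ?b = "beta \<alpha> T"
  have spos: "0 < (\<Sum>t\<in>{1..T}. 1 / \<alpha> t)" using apos T1 by (intro sum_pos) auto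
  have inv1: "?b 1 * (\<Sum>t\<in>{1..T}. 1 / \<alpha> t) = 1" unfolding beta_def using spos by simp
  have pt: "ys t \<omega> = ?b 1 * x * (1 / \<alpha> t) + (\<Sum>k\<in>{1..t-1}. ?b (k+1) / \<alpha> k * ell k \<omega>) / \<alpha> t
      - ell t \<omega> / \<alpha> t" for t
    unfolding ys_def cc_def by (simp add: add_divide_distrib diff_divide_distrib)
  have m: "(\<Sum>t\<in>{1..T}. (\<Sum>k\<in>{1..t-1}. ?b (k+1) / \<alpha> k * ell k \<omega>) / \<alpha> t)
      = (\<Sum>k\<in>{1..T}. if k = T then 0 else ell k \<omega> / \<alpha> k)"
  proof -
    have "(\<Sum>t\<in>{1..T}. (\<Sum>k\<in>{1..t-1}. ?b (k+1) / \<alpha> k * ell k \<omega>) / \<alpha> t)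
        = (\<Sum>t\<in>{1..T}. \<Sum>k\<in>{1..t-1}. ?b (k+1) / \<alpha> k * ell k \<omega> / \<alpha> t)"
      by (simp add: sum_divide_distrib)
    also have "\<dots> = (\<Sum>k\<in>{1..T}. \<Sum>t\<in>{Suc k..T}. ?b (k+1) / \<alpha> k * ell k \<omega> / \<alpha> t)"
      by (rule swap_tri)
    also have "\<dots> = (\<Sum>k\<in>{1..T}. if k = T then 0 else ell k \<omega> / \<alpha> k)"
    proof (rule sum.cong[OF refl])
      fix k assume k: "k \<in> {1..T}"
      show "(\<Sum>t\<in>{Suc k..T}. ?b (k+1) / \<alpha> k * ell k \<omega> / \<alpha> t) = (if k = T then 0 else ell k \<omega> / \<alpha> k)"
      proof (cases "k = T")
        case True then show ?thesis by simp
      next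
        case False
        then have kT: "k < T" using k by auto
        have bp: "0 < ?b (Suc k)" using beta_pos kT by auto
        have "(\<Sum>t\<in>{Suc k..T}. ?b (k+1) / \<alpha> k * ell k \<omega> / \<alpha> t)
            = ?b (k+1) / \<alpha> k * ell k \<omega> * (\<Sum>t\<in>{Suc k..T}. 1 / \<alpha> t)"
          by (simp add: sum_distrib_left)
        also have "(\<Sum>t\<in>{Suc k..T}. 1 / \<alpha> t) = 1 / ?b (Suc k)" unfolding beta_def by simp
        finally show ?thesis using False bp by simp
      qed
    qed
    finally show ?thesis .
  qed
  have "(\<Sum>t\<in>{1..T}. ys t \<omega>) = (\<Sum>t\<in>{1..T}. ?b 1 * x * (1 / \<alpha> t))
      + (\<Sum>t\<in>{1..T}. (\<Sum>k\<in>{1..t-1}. ?b (k+1) / \<alpha> k * ell k \<omega>) / \<alpha> t)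
      - (\<Sum>t\<in>{1..T}. ell t \<omega> / \<alpha> t)"
    unfolding pt by (simp add: sum.distrib sum_subtractf)
  also have "(\<Sum>t\<in>{1..T}. ?b 1 * x * (1 / \<alpha> t)) = x"
  proof -
    have "(\<Sum>t\<in>{1..T}. ?b 1 * x * (1 / \<alpha> t)) = (?b 1 * x) * (\<Sum>t\<in>{1..T}. 1 / \<alpha> t)"
      by (rule sum_distrib_left[symmetric])
    also have "\<dots> = x * (?b 1 * (\<Sum>t\<in>{1..T}. 1 / \<alpha> t))" by (simp add: ac_simps)
    also have "\<dots> = x" using inv1 by simp
    finally show ?thesis .
  qed
  also note m
  also have "x + (\<Sum>k\<in>{1..T}. if k = T then 0 else ell k \<omega> / \<alpha> k) - (\<Sum>t\<in>{1..T}. ell t \<omega> / \<alpha> t)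
      = x - Z \<omega>"
  proof -
    have "(\<Sum>k\<in>{1..T}. if k = T then 0 else ell k \<omega> / \<alpha> k) - (\<Sum>t\<in>{1..T}. ell t \<omega> / \<alpha> t)
        = (\<Sum>k\<in>{1..T}. (if k = T then 0 else ell k \<omega> / \<alpha> k) - ell k \<omega> / \<alpha> k)"
      by (rule sum_subtractf[symmetric])
    also have "\<dots> = (\<Sum>k\<in>{1..T}. if k = T then - (ell k \<omega> / \<alpha> k) else 0)"
      by (rule sum.cong) auto
    also have "\<dots> = - (ell T \<omega> / \<alpha> T)" using T1 by simp
    also have "\<dots> = - Z \<omega>" using T1 apos[of T] by (simp add: ell_T)
    finally show ?thesis by simp
  qed
  finally show ?thesis .
qed

lemma foc:
  assumes t: "1 \<le> t" "t < T" and hm: "h \<in> borel_measurable (F t)" and hb: "bnd M h"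
  shows "(\<integral>\<omega>. h \<omega> * D (Suc t) \<omega> \<partial>M) = (\<integral>\<omega>. h \<omega> * D t \<omega> \<partial>M)"
proof -
  interpret G: sigma_finite_subalgebra M "F t" using sfs t by auto
  have tT: "t \<in> {1..T}" "Suc t \<in> {1..T}" using t by auto
  obtain a b where ab: "0 < a" "AE \<omega> in M. a \<le> L (Suc t) \<omega> \<and> L (Suc t) \<omega> \<le> b"
    using L_props(2)[OF tT(2)] by auto
  have Lm: "L (Suc t) \<in> borel_measurable M" using meas_M[OF _ L_props(1)[OF tT(2)]] t by auto
  have "AE \<omega> in M. \<bar>L (Suc t) \<omega>\<bar> \<le> b" using ab(2) by eventually_elim (use ab(1) in auto)
  then have Lb: "bnd M (L (Suc t))" unfolding bnd_def by blast
  have int: "integrable M (L (Suc t))" using integrable_bnd[OF Lm Lb] .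
  define E where "E = real_cond_exp M (F t) (L (Suc t))"
  define p where "p = beta \<alpha> T t / beta \<alpha> T (Suc t)"
  define q where "q = beta \<alpha> T (Suc t) / \<alpha> t"
  have pq: "q * p + p = 1" unfolding p_def q_def using beta_id[OF t] .
  have Lt: "L t = (\<lambda>\<omega>. E \<omega> powr p)" unfolding E_def p_def using L_rec[OF t] .
  have Ea: "AE \<omega> in M. a \<le> E \<omega>" unfolding E_def
    by (rule G.real_cond_exp_ge_c[OF int]) (use ab(2) in auto)
  define f where "f \<omega> = h \<omega> * exp (- cc (Suc t) \<omega>)" for \<omega>
  have ccm: "cc (Suc t) \<in> borel_measurable (F t)" using cc_meas[of "Suc t" t] t by auto
  have fm: "f \<in> borel_measurable (F t)" unfolding f_def using hm ccm by measurable
  have fM: "f \<in> borel_measurable M" using meas_M[OF _ fm] t by auto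
  have fb: "bnd M f" unfolding f_def using hb cc_bnd[of "Suc t"] t
    by (auto intro!: bnd_mult bnd_exp bnd_minus)
  have hM: "h \<in> borel_measurable M" using meas_M[OF _ hm] t by auto
  have DM: "D t \<in> borel_measurable M" "D (Suc t) \<in> borel_measurable M"
    using meas_M[OF _ D_meas[OF tT(1)]] meas_M[OF _ D_meas[OF tT(2)]] t by auto
  have intfL: "integrable M (\<lambda>\<omega>. f \<omega> * L (Suc t) \<omega>)"
    using fM Lm fb Lb by (intro integrable_bnd bnd_mult) auto
  have "(\<integral>\<omega>. h \<omega> * D (Suc t) \<omega> \<partial>M) = (\<integral>\<omega>. f \<omega> * L (Suc t) \<omega> \<partial>M)"
  proof (rule integral_cong_AE)
    show "(\<lambda>\<omega>. h \<omega> * D (Suc t) \<omega>) \<in> borel_measurable M" using hM DM by measurable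
    show "(\<lambda>\<omega>. f \<omega> * L (Suc t) \<omega>) \<in> borel_measurable M" using fM Lm by measurable
    show "AE \<omega> in M. h \<omega> * D (Suc t) \<omega> = f \<omega> * L (Suc t) \<omega>"
      using ab(2)
    proof eventually_elim
      case (elim \<omega>)
      then have "0 < L (Suc t) \<omega>" using ab(1) by auto
      then show ?case unfolding D_eq[OF tT(2)] f_def ell_def by (simp add: exp_diff exp_minus field_simps)
    qed
  qed
  also have "\<dots> = (\<integral>\<omega>. f \<omega> * E \<omega> \<partial>M)"
    unfolding E_def using G.real_cond_exp_intg(2)[OF intfL fm Lm] by simp
  also have "\<dots> = (\<integral>\<omega>. h \<omega> * D t \<omega> \<partial>M)"
  proof (rule integral_cong_AE)
    show "(\<lambda>\<omega>. h \<omega> * D t \<omega>) \<in> borel_measurable M" using hM DM by measurable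
    show "(\<lambda>\<omega>. f \<omega> * E \<omega>) \<in> borel_measurable M" using fM unfolding E_def by measurable
    show "AE \<omega> in M. f \<omega> * E \<omega> = h \<omega> * D t \<omega>"
      using Ea
    proof eventually_elim
      case (elim \<omega>)
      then have Ep: "0 < E \<omega>" using ab(1) by auto
      have "ell t \<omega> = p * ln (E \<omega>)" unfolding ell_def Lt by simp
      then have "ell t \<omega> - cc t \<omega> = - cc (Suc t) \<omega> + ln (E \<omega>)"
      proof -
        have "(q * p + p) * ln (E \<omega>) = ln (E \<omega>)" using pq by simp
        then show "ell t \<omega> - cc t \<omega> = - cc (Suc t) \<omega> + ln (E \<omega>)"
          unfolding cc_Suc[OF t(1)] q_def[symmetric] using \<open>ell t \<omega> = p * ln (E \<omega>)\<close>
          by (simp add: algebra_simps)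
      qed
      then have "exp (ell t \<omega> - cc t \<omega>) = exp (- cc (Suc t) \<omega> + ln (E \<omega>))" by simp
      also have "\<dots> = exp (- cc (Suc t) \<omega>) * E \<omega>" using Ep by (simp only: exp_add exp_ln)
      finally have "exp (ell t \<omega> - cc t \<omega>) = exp (- cc (Suc t) \<omega>) * E \<omega>" .
      then show ?case unfolding D_eq[OF tT(1)] f_def by simp
    qed
  qed
  finally show ?thesis .
qed

lemma chain:
  assumes "1 \<le> t" "t \<le> T" "h \<in> borel_measurable (F t)" "bnd M h"
  shows "(\<integral>\<omega>. h \<omega> * D t \<omega> \<partial>M) = (\<integral>\<omega>. h \<omega> * D T \<omega> \<partial>M)"
  using assms
proof (induction "T - t" arbitrary: t)
  case 0
  then have "t = T" by auto
  then show ?case by simp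
next
  case (Suc m)
  then have tT: "t < T" by auto
  have "h \<in> borel_measurable (F (Suc t))" using meas_mono[of t "Suc t"] Suc.prems tT by auto
  then have "(\<integral>\<omega>. h \<omega> * D (Suc t) \<omega> \<partial>M) = (\<integral>\<omega>. h \<omega> * D T \<omega> \<partial>M)"
    using Suc.hyps(1)[of "Suc t"] Suc.hyps(2) Suc.prems tT by auto
  then show ?case using foc[of t h] Suc.prems tT by auto
qed


lemma exp_util_bnd: "bnd M f \<Longrightarrow> bnd M (\<lambda>\<omega>. exp_util \<alpha> t (f \<omega>))"
  unfolding exp_util_def divide_inverse by (intro bnd_mult bnd_diff bnd_const bnd_exp bnd_cmult)

lemma exp_util_meas:
  assumes [measurable]: "f \<in> borel_measurable N"
  shows "(\<lambda>\<omega>. exp_util \<alpha> t (f \<omega>)) \<in> borel_measurable N"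
  unfolding exp_util_def by measurable

lemma exp_util_le: "t \<in> {1..T} \<Longrightarrow> exp_util \<alpha> t z \<le> 1 / \<alpha> t"
  unfolding exp_util_def using apos[of t] by (simp add: divide_right_mono)

lemma int_util_le:
  assumes "t \<in> {1..T}"
  shows "integral\<^sup>L M (\<lambda>\<omega>. exp_util \<alpha> t (f \<omega>)) \<le> 1 / \<alpha> t"
proof (cases "integrable M (\<lambda>\<omega>. exp_util \<alpha> t (f \<omega>))")
  case True
  have "integral\<^sup>L M (\<lambda>\<omega>. exp_util \<alpha> t (f \<omega>)) \<le> integral\<^sup>L M (\<lambda>\<omega>. 1 / \<alpha> t)"
    using True exp_util_le[OF assms] by (intro integral_mono) auto
  also have "\<dots> = 1 / \<alpha> t" by (simp add: prob_space)
  finally show ?thesis .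
next
  case False
  then show ?thesis using apos[OF assms] by (simp add: not_integrable_integral_eq)
qed


lemma main:
  fixes r X
  assumes rm: "\<forall>t\<in>{1..T}. r t \<in> borel_measurable (F (t - 1))"
    and rb: "\<exists>C. \<forall>t\<in>{1..T}. AE \<omega> in M. 0 \<le> r t \<omega> \<and> r t \<omega> \<le> C"
    and Xa: "X \<in> adm M F T r (\<lambda>\<omega>. x - Z \<omega>)"
    and opt: "(\<Sum>t\<in>{1..T}. integral\<^sup>L M (\<lambda>\<omega>. exp_util \<alpha> t (disc r X t \<omega>)))
           = Uval M F T r (exp_util \<alpha>) (\<lambda>\<omega>. x - Z \<omega>)"
  shows "\<forall>t\<in>{1..T}. AE \<omega> in M. X t \<omega> = bank r t \<omega> / \<alpha> t * (cc t \<omega> - ell t \<omega>)"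
proof -
  obtain Cr where Cr: "\<forall>t\<in>{1..T}. AE \<omega> in M. 0 \<le> r t \<omega> \<and> r t \<omega> \<le> Cr" using rb by auto
  have AEr: "AE \<omega> in M. \<forall>k\<in>{1..T}. 0 \<le> r k \<omega> \<and> r k \<omega> \<le> Cr"
    using Cr by (intro AE_finite_allI) auto
  have AEB: "AE \<omega> in M. \<forall>t\<in>{1..T}. 1 \<le> bank r t \<omega> \<and> bank r t \<omega> \<le> (1 + Cr) ^ T"
    using AEr
  proof eventually_elim
    case (elim \<omega>)
    show ?case
    proof
      fix t assume t: "t \<in> {1..T}"
      have "1 \<le> bank r t \<omega>" unfolding bank_def using elim t by (intro prod_ge_1) auto
      moreover have "bank r t \<omega> \<le> (\<Prod>k\<in>{1..t}. 1 + Cr)" unfolding bank_def using elim t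
        by (intro prod_mono) auto
      moreover have "0 \<le> Cr" using elim T1 by force
      then have "(\<Prod>k\<in>{1..t}. 1 + Cr) \<le> (1 + Cr) ^ T" using t by (simp add: power_increasing)
      ultimately show "1 \<le> bank r t \<omega> \<and> bank r t \<omega> \<le> (1 + Cr) ^ T" by auto
    qed
  qed
  have bank_meas: "bank r t \<in> borel_measurable (F t)" if t: "t \<in> {1..T}" for t
  proof -
    have "r k \<in> borel_measurable (F t)" if k: "k \<in> {1..t}" for k
      using meas_mono[of "k - 1" t "r k"] rm k t by auto
    then have "(\<lambda>\<omega>. \<Prod>k\<in>{1..t}. 1 + r k \<omega>) \<in> borel_measurable (F t)"
      by (intro borel_measurable_prod borel_measurable_add borel_measurable_const) auto
    moreover have "bank r t = (\<lambda>\<omega>. \<Prod>k\<in>{1..t}. 1 + r k \<omega>)" by (simp add: fun_eq_iff bank_def)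
    ultimately show ?thesis by simp
  qed
  have bank_bnd: "bnd M (bank r t)" if t: "t \<in> {1..T}" for t
  proof -
    have "AE \<omega> in M. \<bar>bank r t \<omega>\<bar> \<le> (1 + Cr) ^ T" using AEB
    proof eventually_elim
      case (elim \<omega>) then show ?case using t by fastforce
    qed
    then show ?thesis unfolding bnd_def by blast
  qed
  have Xm: "\<And>t. t \<in> {1..T} \<Longrightarrow> X t \<in> borel_measurable (F t)"
    and XL: "\<And>t. t \<in> {1..T} \<Longrightarrow> Linf M (F T) (X t)"
    and Xs: "AE \<omega> in M. (\<Sum>t\<in>{1..T}. disc r X t \<omega>) = x - Z \<omega>"
    using Xa unfolding adm_def by auto
  define y where "y = disc r X"
  have y_eq: "y t \<omega> = X t \<omega> / bank r t \<omega>" for t \<omega> by (simp add: y_def disc_def)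
  have y_meas: "y t \<in> borel_measurable (F t)" if t: "t \<in> {1..T}" for t
  proof -
    have [measurable]: "X t \<in> borel_measurable (F t)" "bank r t \<in> borel_measurable (F t)"
      using Xm bank_meas t by auto
    have "y t = (\<lambda>\<omega>. X t \<omega> / bank r t \<omega>)" by (simp add: fun_eq_iff y_eq)
    then show ?thesis by simp
  qed
  have y_bnd: "bnd M (y t)" if t: "t \<in> {1..T}" for t
  proof -
    obtain C where C: "AE \<omega> in M. \<bar>X t \<omega>\<bar> \<le> C" using XL[OF t] unfolding Linf_def by auto
    have "AE \<omega> in M. \<bar>y t \<omega>\<bar> \<le> C" using AEB C
    proof eventually_elim
      case (elim \<omega>)
      then have b: "1 \<le> bank r t \<omega>" using t by auto
      have "\<bar>y t \<omega>\<bar> = \<bar>X t \<omega>\<bar> / bank r t \<omega>" using b by (simp add: y_eq abs_divide)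
      also have "\<dots> \<le> \<bar>X t \<omega>\<bar> / 1" using b by (intro divide_left_mono) auto
      finally show ?case using elim by simp
    qed
    then show ?thesis unfolding bnd_def by blast
  qed
  define Ys where "Ys t \<omega> = bank r t \<omega> * ys t \<omega>" for t \<omega>
  have disc_M: "disc r Y t \<in> borel_measurable M" if t: "t \<in> {1..T}" and Ym: "Y t \<in> borel_measurable (F t)" for Y t
  proof -
    have [measurable]: "Y t \<in> borel_measurable (F t)" "bank r t \<in> borel_measurable (F t)"
      using Ym bank_meas t by auto
    have "disc r Y t = (\<lambda>\<omega>. Y t \<omega> / bank r t \<omega>)" by (simp add: fun_eq_iff disc_def)
    then have "disc r Y t \<in> borel_measurable (F t)" by simp
    then show ?thesis using meas_M t by auto
  qed
  have Ys_meas: "Ys t \<in> borel_measurable (F t)" if t: "t \<in> {1..T}" for t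
  proof -
    have [measurable]: "ys t \<in> borel_measurable (F t)" "bank r t \<in> borel_measurable (F t)"
      using ys_meas bank_meas t by auto
    have YsF: "Ys t = (\<lambda>\<omega>. bank r t \<omega> * ys t \<omega>)" by (simp add: fun_eq_iff Ys_def)
    show ?thesis unfolding YsF by measurable
  qed
  have ys_M: "ys t \<in> borel_measurable M" if "t \<in> {1..T}" for t
    using meas_M[OF _ ys_meas[OF that]] that by auto
  have dYs: "AE \<omega> in M. \<forall>t\<in>{1..T}. disc r Ys t \<omega> = ys t \<omega>" using AEB
  proof eventually_elim
    case (elim \<omega>)
    show ?case
    proof
      fix t assume "t \<in> {1..T}"
      then have "bank r t \<omega> \<noteq> 0" using elim by fastforce
      then show "disc r Ys t \<omega> = ys t \<omega>" by (simp add: disc_def Ys_def)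
    qed
  qed
  have Ys_adm: "Ys \<in> adm M F T r (\<lambda>\<omega>. x - Z \<omega>)"
    unfolding adm_def
  proof (intro CollectI conjI ballI)
    fix t assume t: "t \<in> {1..T}"
    have [measurable]: "ys t \<in> borel_measurable (F t)" "bank r t \<in> borel_measurable (F t)"
      using ys_meas bank_meas t by auto
    have YsF: "Ys t = (\<lambda>\<omega>. bank r t \<omega> * ys t \<omega>)" by (simp add: fun_eq_iff Ys_def)
    show YsM: "Ys t \<in> borel_measurable (F t)" unfolding YsF by measurable
    have "Ys t \<in> borel_measurable (F T)" using meas_mono[OF _ _ YsM] t by auto
    moreover have "bnd M (Ys t)" unfolding YsF using bank_bnd ys_bnd t by (intro bnd_mult) auto
    ultimately show "Linf M (F T) (Ys t)" unfolding Linf_def bnd_def by auto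
  next
    show "AE \<omega> in M. (\<Sum>t\<in>{1..T}. disc r Ys t \<omega>) = x - Z \<omega>" using dYs
    proof eventually_elim
      case (elim \<omega>)
      then have "(\<Sum>t\<in>{1..T}. disc r Ys t \<omega>) = (\<Sum>t\<in>{1..T}. ys t \<omega>)" by (intro sum.cong) auto
      then show ?case using ys_sum by simp
    qed
  qed
  have bdd: "bdd_above {(\<Sum>t\<in>{1..T}. integral\<^sup>L M (\<lambda>\<omega>. exp_util \<alpha> t (disc r Y t \<omega>))) | Y. Y \<in> adm M F T r (\<lambda>\<omega>. x - Z \<omega>)}"
  proof (rule bdd_aboveI)
    fix v assume "v \<in> {(\<Sum>t\<in>{1..T}. integral\<^sup>L M (\<lambda>\<omega>. exp_util \<alpha> t (disc r Y t \<omega>))) | Y. Y \<in> adm M F T r (\<lambda>\<omega>. x - Z \<omega>)}"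
    then obtain Y where "v = (\<Sum>t\<in>{1..T}. integral\<^sup>L M (\<lambda>\<omega>. exp_util \<alpha> t (disc r Y t \<omega>)))" by auto
    then show "v \<le> (\<Sum>t\<in>{1..T}. 1 / \<alpha> t)" using int_util_le by (auto intro!: sum_mono)
  qed
  have "(\<Sum>t\<in>{1..T}. integral\<^sup>L M (\<lambda>\<omega>. exp_util \<alpha> t (disc r Ys t \<omega>))) \<le> Uval M F T r (exp_util \<alpha>) (\<lambda>\<omega>. x - Z \<omega>)"
    unfolding Uval_def by (rule cSup_upper) (use Ys_adm bdd in auto)
  moreover have "(\<Sum>t\<in>{1..T}. integral\<^sup>L M (\<lambda>\<omega>. exp_util \<alpha> t (disc r Ys t \<omega>)))
      = (\<Sum>t\<in>{1..T}. integral\<^sup>L M (\<lambda>\<omega>. exp_util \<alpha> t (ys t \<omega>)))"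
  proof (rule sum.cong[OF refl])
    fix t assume t: "t \<in> {1..T}"
    show "integral\<^sup>L M (\<lambda>\<omega>. exp_util \<alpha> t (disc r Ys t \<omega>)) = integral\<^sup>L M (\<lambda>\<omega>. exp_util \<alpha> t (ys t \<omega>))"
      using dYs t disc_M[of t Ys, OF t Ys_meas[OF t]] ys_M[OF t]
      by (intro integral_cong_AE exp_util_meas) (auto elim!: eventually_mono)
  qed
  ultimately have VV: "(\<Sum>t\<in>{1..T}. integral\<^sup>L M (\<lambda>\<omega>. exp_util \<alpha> t (ys t \<omega>)))
      \<le> (\<Sum>t\<in>{1..T}. integral\<^sup>L M (\<lambda>\<omega>. exp_util \<alpha> t (y t \<omega>)))"
    using opt unfolding y_def by simp
  have y_M: "y t \<in> borel_measurable M" if "t \<in> {1..T}" for t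
    using meas_M[OF _ y_meas[OF that]] that by auto
  have D_M: "D t \<in> borel_measurable M" if "t \<in> {1..T}" for t
    using meas_M[OF _ D_meas[OF that]] that by auto
  define g where "g t = (\<lambda>\<omega>. exp_util \<alpha> t (ys t \<omega>) + (y t \<omega> - ys t \<omega>) * D t \<omega> - exp_util \<alpha> t (y t \<omega>))" for t
  have g_nn: "0 \<le> g t \<omega>" if t: "t \<in> {1..T}" for t \<omega>
  proof -
    have "(y t \<omega> - ys t \<omega>) * D t \<omega> = exp (- \<alpha> t * ys t \<omega>) * (y t \<omega> - ys t \<omega>)" by (simp add: D_def)
    then show ?thesis using util_concave(1)[of "\<alpha> t" "y t \<omega>" "ys t \<omega>"] apos[OF t]
      unfolding g_def exp_util_def by linarith
  qed
  have iu1: "integrable M (\<lambda>\<omega>. exp_util \<alpha> t (ys t \<omega>))" if t: "t \<in> {1..T}" for t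
    using integrable_bnd[OF exp_util_meas[OF ys_M[OF t]] exp_util_bnd[OF ys_bnd[OF t]]] .
  have iu2: "integrable M (\<lambda>\<omega>. exp_util \<alpha> t (y t \<omega>))" if t: "t \<in> {1..T}" for t
    using integrable_bnd[OF exp_util_meas[OF y_M[OF t]] exp_util_bnd[OF y_bnd[OF t]]] .
  have iD: "integrable M (\<lambda>\<omega>. (y t \<omega> - ys t \<omega>) * D s \<omega>)" if t: "t \<in> {1..T}" and s: "s \<in> {1..T}" for t s
  proof (rule integrable_bnd)
    show "(\<lambda>\<omega>. (y t \<omega> - ys t \<omega>) * D s \<omega>) \<in> borel_measurable M"
      using y_M[OF t] ys_M[OF t] D_M[OF s] by measurable
    show "bnd M (\<lambda>\<omega>. (y t \<omega> - ys t \<omega>) * D s \<omega>)"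
      using y_bnd[OF t] ys_bnd[OF t] D_bnd[OF s] by (intro bnd_mult bnd_diff)
  qed
  have ig: "integral\<^sup>L M (g t) = integral\<^sup>L M (\<lambda>\<omega>. exp_util \<alpha> t (ys t \<omega>))
      + integral\<^sup>L M (\<lambda>\<omega>. (y t \<omega> - ys t \<omega>) * D t \<omega>) - integral\<^sup>L M (\<lambda>\<omega>. exp_util \<alpha> t (y t \<omega>))"
    if t: "t \<in> {1..T}" for t
    unfolding g_def using iu1[OF t] iu2[OF t] iD[OF t t]
    by (simp add: Bochner_Integration.integral_diff Bochner_Integration.integral_add)
  have gint: "integrable M (g t)" if t: "t \<in> {1..T}" for t
    unfolding g_def using iu1[OF t] iu2[OF t] iD[OF t t] by auto
  have chainD: "integral\<^sup>L M (\<lambda>\<omega>. (y t \<omega> - ys t \<omega>) * D t \<omega>) = integral\<^sup>L M (\<lambda>\<omega>. (y t \<omega> - ys t \<omega>) * D T \<omega>)"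
    if t: "t \<in> {1..T}" for t
  proof (rule chain)
    show "(\<lambda>\<omega>. y t \<omega> - ys t \<omega>) \<in> borel_measurable (F t)" using y_meas[OF t] ys_meas[OF t] by measurable
    show "bnd M (\<lambda>\<omega>. y t \<omega> - ys t \<omega>)" using y_bnd[OF t] ys_bnd[OF t] by (rule bnd_diff)
  qed (use t in auto)
  have TT: "T \<in> {1..T}" using T1 by auto
  have sumD: "(\<Sum>t\<in>{1..T}. integral\<^sup>L M (\<lambda>\<omega>. (y t \<omega> - ys t \<omega>) * D t \<omega>)) = 0"
  proof -
    have "(\<Sum>t\<in>{1..T}. integral\<^sup>L M (\<lambda>\<omega>. (y t \<omega> - ys t \<omega>) * D t \<omega>))
        = (\<Sum>t\<in>{1..T}. integral\<^sup>L M (\<lambda>\<omega>. (y t \<omega> - ys t \<omega>) * D T \<omega>))"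
      using chainD by (intro sum.cong) auto
    also have "\<dots> = integral\<^sup>L M (\<lambda>\<omega>. \<Sum>t\<in>{1..T}. (y t \<omega> - ys t \<omega>) * D T \<omega>)"
      by (rule Bochner_Integration.integral_sum[symmetric]) (use iD TT in auto)
    also have "\<dots> = integral\<^sup>L M (\<lambda>\<omega>. 0)"
    proof (rule integral_cong_AE)
      show "(\<lambda>\<omega>. \<Sum>t\<in>{1..T}. (y t \<omega> - ys t \<omega>) * D T \<omega>) \<in> borel_measurable M"
        using iD TT by (intro borel_measurable_sum) auto
      show "AE \<omega> in M. (\<Sum>t\<in>{1..T}. (y t \<omega> - ys t \<omega>) * D T \<omega>) = 0" using Xs
      proof eventually_elim
        case (elim \<omega>)
        have "(\<Sum>t\<in>{1..T}. (y t \<omega> - ys t \<omega>) * D T \<omega>) = ((\<Sum>t\<in>{1..T}. y t \<omega>) - (\<Sum>t\<in>{1..T}. ys t \<omega>)) * D T \<omega>"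
          by (simp only: sum_distrib_right[symmetric] sum_subtractf)
        also have "\<dots> = 0" using elim ys_sum unfolding y_def by simp
        finally show ?case .
      qed
    qed simp
    finally show ?thesis by simp
  qed
  have "(\<Sum>t\<in>{1..T}. integral\<^sup>L M (g t)) = (\<Sum>t\<in>{1..T}. integral\<^sup>L M (\<lambda>\<omega>. exp_util \<alpha> t (ys t \<omega>)))
      + (\<Sum>t\<in>{1..T}. integral\<^sup>L M (\<lambda>\<omega>. (y t \<omega> - ys t \<omega>) * D t \<omega>))
      - (\<Sum>t\<in>{1..T}. integral\<^sup>L M (\<lambda>\<omega>. exp_util \<alpha> t (y t \<omega>)))"
    using ig by (simp add: sum.distrib sum_subtractf)
  then have "(\<Sum>t\<in>{1..T}. integral\<^sup>L M (g t)) \<le> 0" using VV sumD by simp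
  moreover have "0 \<le> integral\<^sup>L M (g t)" if "t \<in> {1..T}" for t
    using g_nn[OF that] by (intro integral_nonneg_AE) auto
  ultimately have g0: "\<forall>t\<in>{1..T}. integral\<^sup>L M (g t) = 0"
    using sum_nonneg_eq_0_iff[of "{1..T}" "\<lambda>t. integral\<^sup>L M (g t)"]
    by (metis (no_types, lifting) antisym finite_atLeastAtMost sum_nonneg)
  show ?thesis
  proof
    fix t assume t: "t \<in> {1..T}"
    have "AE \<omega> in M. g t \<omega> = 0"
      using integral_nonneg_eq_0_iff_AE[OF gint[OF t]] g0 t g_nn[OF t] by auto
    then show "AE \<omega> in M. X t \<omega> = bank r t \<omega> / \<alpha> t * (cc t \<omega> - ell t \<omega>)" using AEB
    proof eventually_elim
      case (elim \<omega>)
      then have b: "1 \<le> bank r t \<omega>" using t by auto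
      have "(y t \<omega> - ys t \<omega>) * D t \<omega> = exp (- \<alpha> t * ys t \<omega>) * (y t \<omega> - ys t \<omega>)" by (simp add: D_def)
      then have "y t \<omega> = ys t \<omega>"
        using util_concave(2)[of "\<alpha> t" "y t \<omega>" "ys t \<omega>"] apos[OF t] elim(1)
        unfolding g_def exp_util_def by linarith
      then have "X t \<omega> / bank r t \<omega> = (cc t \<omega> - ell t \<omega>) / \<alpha> t" by (simp add: y_eq ys_def)
      then show ?case using b by (simp add: field_simps)
    qed
  qed
qed

end
theorem proposition3p5:
  fixes M :: "'a measure" and F :: "nat \<Rightarrow> 'a measure" and T :: nat
    and r :: "nat \<Rightarrow> 'a \<Rightarrow> real" and \<alpha> :: "nat \<Rightarrow> real"
    and x :: real and Z :: "'a \<Rightarrow> real" and X :: "nat \<Rightarrow> 'a \<Rightarrow> real"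
  assumes "prob_space M"
    and "T \<ge> 1"
    and "filtration_upto M F T"
    and "\<forall>t\<in>{1..T}. r t \<in> borel_measurable (F (t - 1))"
    and "\<exists>C. \<forall>t\<in>{1..T}. AE \<omega> in M. 0 \<le> r t \<omega> \<and> r t \<omega> \<le> C"
    and "\<forall>t\<in>{1..T}. \<alpha> t > 0"
    and "Linf M (F T) Z"
    and "X \<in> adm M F T r (\<lambda>\<omega>. x - Z \<omega>)"
    and "(\<Sum>t\<in>{1..T}. integral\<^sup>L M (\<lambda>\<omega>. exp_util \<alpha> t (disc r X t \<omega>)))
           = Uval M F T r (exp_util \<alpha>) (\<lambda>\<omega>. x - Z \<omega>)"
  shows "(AE \<omega> in M. X 1 \<omega> = bank r 1 \<omega> / \<alpha> 1 *
            (beta \<alpha> T 1 * x - ln (Lfun M F T \<alpha> (\<lambda>\<omega>. - Z \<omega>) 1 \<omega>)))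
    \<and> (\<forall>t\<in>{2..T}. AE \<omega> in M. X t \<omega> = bank r t \<omega> / \<alpha> t *
            (beta \<alpha> T 1 * x - ln (Lfun M F T \<alpha> (\<lambda>\<omega>. - Z \<omega>) t \<omega>)
             + (\<Sum>k\<in>{1..t-1}. beta \<alpha> T (k + 1) / \<alpha> k * ln (Lfun M F T \<alpha> (\<lambda>\<omega>. - Z \<omega>) k \<omega>))))"
proof -
  have SS: "S M F T \<alpha> Z" unfolding S_def S_axioms_def using assms by auto
  interpret S M F T \<alpha> Z x by (rule SS)
  have m: "\<forall>t\<in>{1..T}. AE \<omega> in M. X t \<omega> = bank r t \<omega> / \<alpha> t * (cc t \<omega> - ell t \<omega>)"
    using main[OF assms(4,5,8,9)] .
  have ell: "ell t \<omega> = ln (Lfun M F T \<alpha> (\<lambda>\<omega>. - Z \<omega>) t \<omega>)" for t \<omega> by (simp add: ell_def L_def)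
  show ?thesis
  proof
    have "1 \<in> {1..T}" using assms(2) by auto
    then have "AE \<omega> in M. X 1 \<omega> = bank r 1 \<omega> / \<alpha> 1 * (cc 1 \<omega> - ell 1 \<omega>)" using m by blast
    then show "AE \<omega> in M. X 1 \<omega> = bank r 1 \<omega> / \<alpha> 1 *
            (beta \<alpha> T 1 * x - ln (Lfun M F T \<alpha> (\<lambda>\<omega>. - Z \<omega>) 1 \<omega>))"
      by (rule eventually_mono) (simp add: cc_def ell)
  next
    show "\<forall>t\<in>{2..T}. AE \<omega> in M. X t \<omega> = bank r t \<omega> / \<alpha> t *
            (beta \<alpha> T 1 * x - ln (Lfun M F T \<alpha> (\<lambda>\<omega>. - Z \<omega>) t \<omega>)
             + (\<Sum>k\<in>{1..t-1}. beta \<alpha> T (k + 1) / \<alpha> k * ln (Lfun M F T \<alpha> (\<lambda>\<omega>. - Z \<omega>) k \<omega>)))"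
    proof
      fix t assume "t \<in> {2..T}"
      then have "t \<in> {1..T}" by auto
      then have "AE \<omega> in M. X t \<omega> = bank r t \<omega> / \<alpha> t * (cc t \<omega> - ell t \<omega>)" using m by auto
      then show "AE \<omega> in M. X t \<omega> = bank r t \<omega> / \<alpha> t *
            (beta \<alpha> T 1 * x - ln (Lfun M F T \<alpha> (\<lambda>\<omega>. - Z \<omega>) t \<omega>)
             + (\<Sum>k\<in>{1..t-1}. beta \<alpha> T (k + 1) / \<alpha> k * ln (Lfun M F T \<alpha> (\<lambda>\<omega>. - Z \<omega>) k \<omega>)))"
        by (rule eventually_mono) (simp add: cc_def ell algebra_simps)
    qed
  qed
qed

end
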